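(* Assume that the continuum $\mathfrak{c}$ is a regular cardinal. Let $X$ be a Polish space, let $\{Y_\alpha:\alpha<\mathfrak{c}\}$ be Polish spaces, and let $\{f_\alpha:\alpha<\mathfrak{c}\}$ be functions $f_\alpha: X\to Y_\alpha$ such that for every $\alpha<\mathfrak{c}$: (1) $f_\alpha[X]=Y_\alpha$; (2) for every $y\in Y_\alpha$, $|f_\alpha^{-1}[\{y\}]|<\mathfrak{c}$. Then there exists $A\subseteq X$ such that for every $\alpha<\mathfrak{c}$ the image $f_\alpha[A]$ is a Bernstein set in $Y_\alpha$.
   Context: A subset $S$ of a Polish space $Y$ is a Bernstein set in $Y$ if for every nonempty perfect set $P\subseteq Y$ we have $S\cap P\neq\emptyset$ and $(Y\setminus S)\cap P\neq\emptyset$. The functions $f_\alpha$ are arbitrary (no continuity is assumed). *)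

theory Defs
  imports "HOL-Analysis.Analysis"
begin

definition Polish_space :: "'a topology \<Rightarrow> bool" where
  "Polish_space X \<longleftrightarrow> completely_metrizable_space X \<and> separable_space X"

definition perfect_set :: "'a topology \<Rightarrow> 'a set \<Rightarrow> bool" where
  "perfect_set Y P \<longleftrightarrow> closedin Y P \<and> Y derived_set_of P = P"

definition Bernstein_set :: "'a topology \<Rightarrow> 'a set \<Rightarrow> bool" where
  "Bernstein_set Y S \<longleftrightarrow> S \<subseteq> topspace Y \<and>
     (\<forall>P. perfect_set Y P \<and> P \<noteq> {} \<longrightarrow> S \<inter> P \<noteq> {} \<and> (topspace Y - S) \<inter> P \<noteq> {})"

end

theory Submission
  imports Defs "HOL-Library.Equipollence"
begin
unbundle cardinal_syntax

lemma (in Metric_space) sep_second_countable: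
  assumes "separable_space mtopology" shows "second_countable mtopology"
proof -
  obtain C where C: "countable C" "C \<subseteq> M" "mtopology closure_of C = M"
    using assms unfolding separable_space_def by auto
  define B where "B = (\<lambda>(c,n). mball c (1 / real (Suc n))) ` (C \<times> (UNIV::nat set))"
  have "countable B" unfolding B_def using C(1) by auto
  moreover have "\<forall>V\<in>B. openin mtopology V" unfolding B_def by auto
  moreover have "\<exists>V\<in>B. x \<in> V \<and> V \<subseteq> U" if U: "openin mtopology U" "x \<in> U" for U x
  proof -
    obtain r where r: "r > 0" "mball x r \<subseteq> U" using U openin_mtopology by blast
    have xM: "x \<in> M" using U openin_mtopology by blast
    obtain n where n: "1 / real (Suc n) < r/2"
      using nat_approx_posE[of "r/2"] r(1) by auto
    have pos: "(0::real) < 1 / real (Suc n)" by simp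
    have "x \<in> mtopology closure_of C" using C xM by auto
    then have "\<forall>e>0. \<exists>y\<in>C. y \<in> mball x e" unfolding metric_closure_of by blast
    then obtain c where c: "c \<in> C" "c \<in> mball x (1 / real (Suc n))"
      using pos by blast
    have dxc: "d x c < 1 / real (Suc n)" using c(2) by simp
    have "d c x = d x c" by (rule commute)
    then have le: "d c x + 1 / real (Suc n) \<le> r" using dxc n by linarith
    have "mball c (1 / real (Suc n)) \<subseteq> mball x r"
      by (rule mball_subset[OF le xM])
    moreover have "x \<in> mball c (1 / real (Suc n))" using c(2) \<open>d c x = d x c\<close> dxc by simp
    moreover have "mball c (1 / real (Suc n)) \<in> B" unfolding B_def using c by auto
    ultimately show ?thesis using r by blast
  qed
  ultimately show ?thesis unfolding second_countable_def by blast
qed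

lemma closed_sets_lepoll:
  assumes "second_countable X" shows "{C. closedin X C} \<lesssim> (UNIV::real set)"
proof -
  obtain B where B: "countable B" "\<forall>V \<in> B. openin X V"
       "\<forall>U x. openin X U \<and> x \<in> U \<longrightarrow> (\<exists>V \<in> B. x \<in> V \<and> V \<subseteq> U)"
    using assms unfolding second_countable_def by auto
  obtain g :: "_ \<Rightarrow> nat" where g: "inj_on g B" using B(1) unfolding countable_def by auto
  define \<phi> where "\<phi> C = {V\<in>B. V \<subseteq> topspace X - C}" for C
  have U: "\<Union>(\<phi> C) = topspace X - C" if cl: "closedin X C" for C
  proof
    show "\<Union>(\<phi> C) \<subseteq> topspace X - C" unfolding \<phi>_def by auto
    show "topspace X - C \<subseteq> \<Union>(\<phi> C)"
    proof
      fix x assume "x \<in> topspace X - C"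
      then obtain V where "V \<in> B" "x \<in> V" "V \<subseteq> topspace X - C"
        using B(3) openin_diff[OF openin_topspace cl] by blast
      then show "x \<in> \<Union>(\<phi> C)" unfolding \<phi>_def by auto
    qed
  qed
  have "inj_on (\<lambda>C. g ` \<phi> C) {C. closedin X C}"
  proof (rule inj_onI)
    fix C D assume C: "C \<in> {C. closedin X C}" and D: "D \<in> {C. closedin X C}"
      and e: "g ` \<phi> C = g ` \<phi> D"
    have "\<phi> C = \<phi> D" using e g inj_on_image_eq_iff[OF g] unfolding \<phi>_def by (metis (no_types, lifting) mem_Collect_eq subsetI)
    then have "topspace X - C = topspace X - D" using U C D by (metis mem_Collect_eq)
    then show "C = D" using C D closedin_subset by (metis Diff_Diff_Int inf.absorb2 mem_Collect_eq)
  qed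
  then have "{C. closedin X C} \<lesssim> (UNIV :: nat set set)" unfolding lepoll_def by blast
  also have "\<dots> \<lesssim> (UNIV::real set)" using eqpoll_imp_lepoll nat_sets_eqpoll_reals by blast
  finally show ?thesis .
qed


lemma lepoll_ordLeq: "A \<lesssim> B \<Longrightarrow> card_of A \<le>o card_of B"
  unfolding lepoll_def using card_of_ordLeq by blast

lemma fin_less: "finite A \<Longrightarrow> \<not> finite B \<Longrightarrow> card_of A <o card_of B"
  using finite_ordLess_infinite[OF card_of_Well_order card_of_Well_order, of A B] by (simp add: Field_card_of)

lemma polish_closed_lepoll: "Polish_space X \<Longrightarrow> {C. closedin X C} \<lesssim> (UNIV::real set)"
proof -
  assume "Polish_space X"
  then obtain M d where "Metric_space M d" "X = Metric_space.mtopology M d" "separable_space X"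
    unfolding Polish_space_def completely_metrizable_space_def by blast
  then have "second_countable X" using Metric_space.sep_second_countable by blast
  then show ?thesis by (rule closed_sets_lepoll)
qed

theorem mainTheorem1:
  fixes X :: "'a topology" and I :: "'i set"
    and Y :: "'i \<Rightarrow> 'b topology" and f :: "'i \<Rightarrow> 'a \<Rightarrow> 'b"
  assumes cont_regular: "regularCard (card_of (UNIV :: real set))"
    and I_card: "(card_of I, card_of (UNIV :: real set)) \<in> ordIso"
    and X_polish: "Polish_space X"
    and Y_polish: "\<forall>i\<in>I. Polish_space (Y i)"
    and onto: "\<forall>i\<in>I. f i ` topspace X = topspace (Y i)"
    and small_fibres: "\<forall>i\<in>I. \<forall>y\<in>topspace (Y i).
                        (card_of {x \<in> topspace X. f i x = y}, card_of (UNIV :: real set)) \<in> ordLess"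
  shows "\<exists>A \<subseteq> topspace X. \<forall>i\<in>I. Bernstein_set (Y i) (f i ` A)"
proof -
  let ?c = "card_of (UNIV::real set)"
  have cC: "Card_order ?c" by (rule card_of_Card_order)
  have infR: "\<not> finite (UNIV::real set)" by (rule infinite_UNIV_char_0)
  have infc: "\<not> finite (Field ?c)" using infR by (simp add: Field_card_of)
  have stab: "stable ?c" by (rule regularCard_stable[OF cC infc cont_regular])
  define T where "T = {(i,P). i \<in> I \<and> perfect_set (Y i) P \<and> P \<noteq> {}}"
  show ?thesis
  proof (cases "T = {}")
    case True
    have "\<forall>i\<in>I. Bernstein_set (Y i) (f i ` {})"
      using True unfolding T_def Bernstein_set_def by auto
    then show ?thesis by blast
  next
    case False
    have Tle: "card_of T \<le>o ?c"
    proof -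
      have "T \<subseteq> Sigma I (\<lambda>i. {C. closedin (Y i) C})" unfolding T_def perfect_set_def by auto
      then have "card_of T \<le>o card_of (Sigma I (\<lambda>i. {C. closedin (Y i) C}))" by (rule card_of_mono1)
      also have "card_of (Sigma I (\<lambda>i. {C. closedin (Y i) C})) \<le>o ?c"
      proof (rule card_of_Sigma_ordLeq_infinite[OF infR])
        show "card_of I \<le>o ?c" by (rule conjunct1[OF ordIso_iff_ordLeq[THEN iffD1, OF I_card]])
        show "\<forall>i\<in>I. card_of {C. closedin (Y i) C} \<le>o ?c"
        proof
          fix i assume "i \<in> I"
          then have "Polish_space (Y i)" using Y_polish by blast
          then show "card_of {C. closedin (Y i) C} \<le>o ?c" by (intro lepoll_ordLeq polish_closed_lepoll)
        qed
      qed
      finally show ?thesis .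
    qed
    have "\<exists>g. g ` (UNIV::real set) = T" using card_of_ordLeq2[OF False, of "UNIV::real set"] Tle by simp
    then obtain g :: "real \<Rightarrow> 'i \<times> 'b set" where g: "g ` UNIV = T" by blast
    have gT: "g \<xi> \<in> T" for \<xi> using g by blast
    define r where "r = ?c"
    define R where "R = r - Id"
    have wo: "Well_order r" unfolding r_def by (rule card_of_Well_order)
    have wfR: "wf R" unfolding R_def using wo by (simp add: well_order_on_def)
    have underS_R: "underS r a = {b. (b,a) \<in> R}" for a unfolding underS_def R_def by auto
    have ulc: "card_of (underS r a) <o ?c" for a
      using card_of_underS[OF cC, of a] by (simp add: Field_card_of r_def)
    define fib where "fib h \<eta> = {x \<in> topspace X. f (fst (g \<eta>)) x = snd (h \<eta>)}"
      for h :: "real \<Rightarrow> 'a \<times> 'b" and \<eta>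
    define Q where "Q h \<xi> p \<longleftrightarrow> fst p \<in> topspace X \<and> f (fst (g \<xi>)) (fst p) \<in> snd (g \<xi>)
         \<and> fst p \<notin> (\<Union>\<eta>\<in>underS r \<xi>. fib h \<eta>) \<and> snd p \<in> snd (g \<xi>) \<and> snd p \<noteq> f (fst (g \<xi>)) (fst p)
         \<and> snd p \<notin> f (fst (g \<xi>)) ` (\<lambda>\<eta>. fst (h \<eta>)) ` underS r \<xi>" for h \<xi> p
    have step: "\<exists>p. Q h \<xi> p" for h \<xi>
    proof -
      obtain i P where gi: "g \<xi> = (i,P)" by (cases "g \<xi>")
      have iP: "i \<in> I" "perfect_set (Y i) P" "P \<noteq> {}" using gT[of \<xi>] gi unfolding T_def by auto
      have Ptop: "P \<subseteq> topspace (Y i)" using iP(2) closedin_subset unfolding perfect_set_def by blast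
      have cmY: "completely_metrizable_space (Y i)" using Y_polish iP(1) unfolding Polish_space_def by blast
      have dP: "Y i derived_set_of P = P" using iP(2) unfolding perfect_set_def by blast
      have "(UNIV::real set) \<lesssim> P" using lepoll_perfect_set[of "Y i" P] cmY dP iP(3) by blast
      then have Pc: "?c \<le>o card_of P" by (rule lepoll_ordLeq)
      have fibc: "card_of (fib h \<eta>) <o ?c" for \<eta>
      proof -
        have j: "fst (g \<eta>) \<in> I" using gT[of \<eta>] unfolding T_def by (cases "g \<eta>") auto
        show ?thesis
        proof (cases "snd (h \<eta>) \<in> topspace (Y (fst (g \<eta>)))")
          case True then show ?thesis unfolding fib_def by (rule small_fibres[rule_format, OF j])
        next
          case False
          have "f (fst (g \<eta>)) x \<in> topspace (Y (fst (g \<eta>)))" if "x \<in> topspace X" for x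
            using onto j that by blast
          then have "fib h \<eta> = {}" using False unfolding fib_def by (metis (mono_tags, lifting) empty_Collect_eq)
          then show ?thesis using fin_less[OF finite.emptyI infR] by simp
        qed
      qed
      have Fc: "card_of (\<Union>\<eta>\<in>underS r \<xi>. fib h \<eta>) <o ?c"
        by (rule stable_UNION[OF stab ulc]) (rule fibc)
      define Bs where "Bs = {x \<in> topspace X. f i x \<in> P}"
      have "P \<subseteq> f i ` Bs"
      proof
        fix y assume y: "y \<in> P"
        then have "y \<in> f i ` topspace X" using Ptop onto iP(1) by blast
        then obtain x where "x \<in> topspace X" "y = f i x" by blast
        then show "y \<in> f i ` Bs" unfolding Bs_def using y by blast
      qed
      then have "card_of P \<le>o card_of (f i ` Bs)" by (rule card_of_mono1)
      then have "card_of P \<le>o card_of Bs" by (rule ordLeq_transitive[OF _ card_of_image])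
      then have Bc: "?c \<le>o card_of Bs" by (rule ordLeq_transitive[OF Pc])
      have "\<not> Bs \<subseteq> (\<Union>\<eta>\<in>underS r \<xi>. fib h \<eta>)"
      proof
        assume "Bs \<subseteq> (\<Union>\<eta>\<in>underS r \<xi>. fib h \<eta>)"
        then have "card_of Bs \<le>o card_of (\<Union>\<eta>\<in>underS r \<xi>. fib h \<eta>)" by (rule card_of_mono1)
        then have "?c \<le>o card_of (\<Union>\<eta>\<in>underS r \<xi>. fib h \<eta>)" by (rule ordLeq_transitive[OF Bc])
        then show False using not_ordLess_ordLeq[OF Fc] by blast
      qed
      then obtain x where x: "x \<in> Bs" "x \<notin> (\<Union>\<eta>\<in>underS r \<xi>. fib h \<eta>)" by blast
      define Cs where "Cs = f i ` ({x} \<union> (\<lambda>\<eta>. fst (h \<eta>)) ` underS r \<xi>)"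
      have "card_of ({x} \<union> (\<lambda>\<eta>. fst (h \<eta>)) ` underS r \<xi>) <o ?c"
      proof (rule card_of_Un_ordLess_infinite[OF infR])
        show "card_of {x} <o ?c" by (rule fin_less[OF _ infR]) simp
        show "card_of ((\<lambda>\<eta>. fst (h \<eta>)) ` underS r \<xi>) <o ?c"
          by (rule ordLeq_ordLess_trans[OF card_of_image ulc])
      qed
      then have Csc: "card_of Cs <o ?c" unfolding Cs_def by (rule ordLeq_ordLess_trans[OF card_of_image])
      have "\<not> P \<subseteq> Cs"
      proof
        assume "P \<subseteq> Cs"
        then have "card_of P \<le>o card_of Cs" by (rule card_of_mono1)
        then have "?c \<le>o card_of Cs" by (rule ordLeq_transitive[OF Pc])
        then show False using not_ordLess_ordLeq[OF Csc] by blast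
      qed
      then obtain y where y: "y \<in> P" "y \<notin> Cs" by blast
      have "Q h \<xi> (x,y)" unfolding Q_def using x y gi unfolding Bs_def Cs_def by auto
      then show ?thesis by blast
    qed
    define H where "H h \<xi> = (SOME p. Q h \<xi> p)" for h \<xi>
    define s where "s = wfrec R H"
    have Qcut: "Q (cut s R \<xi>) \<xi> p = Q s \<xi> p" for \<xi> p
    proof -
      have eq: "cut s R \<xi> \<eta> = s \<eta>" if "\<eta> \<in> underS r \<xi>" for \<eta>
        using that underS_R cut_apply by auto
      have e1: "(\<Union>\<eta>\<in>underS r \<xi>. fib (cut s R \<xi>) \<eta>) = (\<Union>\<eta>\<in>underS r \<xi>. fib s \<eta>)"
        by (rule SUP_cong) (simp_all add: fib_def eq)
      have e2: "(\<lambda>\<eta>. fst (cut s R \<xi> \<eta>)) ` underS r \<xi> = (\<lambda>\<eta>. fst (s \<eta>)) ` underS r \<xi>"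
        by (rule image_cong) (simp_all add: eq)
      show ?thesis unfolding Q_def e1 e2 ..
    qed
    have Qs: "Q s \<xi> (s \<xi>)" for \<xi>
    proof -
      have e: "s \<xi> = H (cut s R \<xi>) \<xi>" unfolding s_def by (rule wfrec[OF wfR])
      have "Q (cut s R \<xi>) \<xi> (H (cut s R \<xi>) \<xi>)" unfolding H_def by (rule someI_ex[OF step])
      then show ?thesis using Qcut e by simp
    qed
    define A where "A = (\<lambda>\<xi>. fst (s \<xi>)) ` UNIV"
    have "fst (s \<xi>) \<in> topspace X" for \<xi> using Qs[of \<xi>] unfolding Q_def by blast
    then have Asub: "A \<subseteq> topspace X" unfolding A_def by blast
    have "Bernstein_set (Y i) (f i ` A)" if i: "i \<in> I" for i
      unfolding Bernstein_set_def
    proof (intro conjI allI impI)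
      show "f i ` A \<subseteq> topspace (Y i)" using Asub onto i by blast
      fix P assume P: "perfect_set (Y i) P \<and> P \<noteq> {}"
      then have "(i,P) \<in> T" using i T_def by auto
      then obtain \<xi> where gx: "g \<xi> = (i,P)" using g by (metis imageE)
      have Ptop: "P \<subseteq> topspace (Y i)" using P closedin_subset unfolding perfect_set_def by blast
      have Q: "Q s \<xi> (s \<xi>)" by (rule Qs)
      have m: "f i (fst (s \<xi>)) \<in> P" using Q gx unfolding Q_def by simp
      have "f i (fst (s \<xi>)) \<in> f i ` A" unfolding A_def by blast
      then show "f i ` A \<inter> P \<noteq> {}" using m by blast
      have ynot: "snd (s \<xi>) \<notin> f i ` A"
      proof
        assume "snd (s \<xi>) \<in> f i ` A"
        then obtain \<eta> where eq: "f i (fst (s \<eta>)) = snd (s \<xi>)" unfolding A_def by auto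
        have tot: "(\<eta>,\<xi>) \<in> r \<or> (\<xi>,\<eta>) \<in> r"
          using wo_rel.TOTALS[of r] wo unfolding wo_rel_def r_def by (simp add: Field_card_of)
        consider "\<eta> = \<xi>" | "\<eta> \<in> underS r \<xi>" | "\<xi> \<in> underS r \<eta>" using tot unfolding underS_def by auto
        then show False
        proof cases
          case 1 then show False using Q eq gx unfolding Q_def by auto
        next
          case 2
          have "f i (fst (s \<eta>)) \<in> f i ` (\<lambda>\<eta>. fst (s \<eta>)) ` underS r \<xi>" using 2 by blast
          then show False using Q eq gx unfolding Q_def by simp
        next
          case 3 then have "fst (s \<eta>) \<notin> fib s \<xi>" using Qs[of \<eta>] unfolding Q_def by auto
          then show False using eq gx Qs[of \<eta>] unfolding fib_def Q_def by auto
        qed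
      qed
      show "(topspace (Y i) - f i ` A) \<inter> P \<noteq> {}" using ynot Q gx Ptop unfolding Q_def by auto
    qed
    then show ?thesis using Asub by blast
  qed
qed

end
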